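(* For any integers $n\ge1$ and $m\ge1$ there exist instances of the dynamic model in the context with $|\mathcal U_0|\ge n$ and $|\mathcal C_0|\ge m$ such that $\mathrm{LTE}(\mathbf{FL})>0$ and $$\frac{\mathrm{LTE}(\mathbf{UC})}{\mathrm{LTE}(\mathbf{FL})}=0.$$
   Context: An instance consists of a dimension $D$, users $\mathcal U_0=\{1,\dots,U\}$ with types $u_i\in\mathbb R^D_{\ge0}$, creators $\mathcal C_0=\{1,\dots,C\}$ with types $c_j\in\mathbb R^D_{\ge 0}$, all of Euclidean norm $1$, a positive integer $K$, a creator threshold $\bar a\in\mathbb N_0$ and a user threshold $\bar e\in[0,1]$. Time $t=0,1,2,\dots$; at time $t$ the platform has sets $\mathcal U_t\subseteq\mathcal U_0$, $\mathcal C_t\subseteq\mathcal C_0$ and chooses a recommendation $R_t$ assigning each $i\in\mathcal U_t$ a set $R_t(i)\subseteq\mathcal C_t$ of size $K$ (of smaller size only if necessary, e.g. $|\mathcal C_t|<K$). Engagement is $E(\mathcal U,\mathcal C,R)=\sum_{i\in\mathcal U}\sum_{j\in R(i)}u_i^Tc_j$. Then $\mathcal U_{t+1}=\{i\in\mathcal U_t:|R_t(i)|=K,\ u_i^Tc_j\ge\bar e\ \forall j\in R_t(i)\}$ and $\mathcal C_{t+1}=\{j\in\mathcal C_t:|\{i\in\mathcal U_t:j\in R_t(i)\}|\ge\bar a\}$. For a sequence $\mathbf R=(R_0,R_1,\dots)$, $\mathrm{LTE}(\mathbf R)=\lim_{T\to\infty}\frac1T\sum_{t=0}^{T-1}E(\mathcal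 U_t,\mathcal C_t,R_t)$. $\mathbf{FL}$ denotes any sequence maximizing $\mathrm{LTE}$. $\mathbf{UC}$ is the user-centric sequence with $UC_t(i)\in\arg\max_{S\subseteq\mathcal C_t,|S|\le K}\sum_{j\in S}u_i^Tc_j$ for all $t$ and $i\in\mathcal U_t$ (each user gets her $K$ highest-engagement remaining creators, or all remaining creators if fewer than $K$). *)

theory Defs
  imports Complex_Main
begin

text \<open>An instance of the dynamic recommendation model. Vectors in R^D are
  represented as functions nat \<Rightarrow> real, only coordinates k < D matter.
  Users are 1..U, creators are 1..C.\<close>

record rinstance =
  dim :: nat
  nU :: nat
  nC :: nat
  utype :: "nat \<Rightarrow> nat \<Rightarrow> real"
  ctype :: "nat \<Rightarrow> nat \<Rightarrow> real"
  kK :: nat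
  abar :: nat
  ebar :: real

definition unit_nonneg :: "nat \<Rightarrow> (nat \<Rightarrow> real) \<Rightarrow> bool" where
  "unit_nonneg D v \<longleftrightarrow> (\<forall>k<D. v k \<ge> 0) \<and> sqrt (\<Sum>k<D. (v k)\<^sup>2) = 1"

definition wf_instance :: "rinstance \<Rightarrow> bool" where
  "wf_instance I \<longleftrightarrow>
     (\<forall>i\<in>{1..nU I}. unit_nonneg (dim I) (utype I i)) \<and>
     (\<forall>j\<in>{1..nC I}. unit_nonneg (dim I) (ctype I j)) \<and>
     kK I \<ge> 1 \<and> 0 \<le> ebar I \<and> ebar I \<le> 1"

definition eng :: "rinstance \<Rightarrow> nat \<Rightarrow> nat \<Rightarrow> real" where
  "eng I i j = (\<Sum>k<dim I. utype I i k * ctype I j k)"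

type_synonym recommendation = "nat \<Rightarrow> nat set"

definition engagement :: "rinstance \<Rightarrow> nat set \<Rightarrow> recommendation \<Rightarrow> real" where
  "engagement I Us R = (\<Sum>i\<in>Us. \<Sum>j\<in>R i. eng I i j)"

definition valid_rec :: "rinstance \<Rightarrow> nat set \<Rightarrow> nat set \<Rightarrow> recommendation \<Rightarrow> bool" where
  "valid_rec I Us Cs R \<longleftrightarrow> (\<forall>i\<in>Us. R i \<subseteq> Cs \<and> card (R i) = min (kK I) (card Cs))"

definition next_users :: "rinstance \<Rightarrow> nat set \<Rightarrow> recommendation \<Rightarrow> nat set" where
  "next_users I Us R = {i\<in>Us. card (R i) = kK I \<and> (\<forall>j\<in>R i. eng I i j \<ge> ebar I)}"

definition next_creators :: "rinstance \<Rightarrow> nat set \<Rightarrow> nat set \<Rightarrow> recommendation \<Rightarrow> nat set" where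
  "next_creators I Us Cs R = {j\<in>Cs. card {i\<in>Us. j \<in> R i} \<ge> abar I}"

fun state :: "rinstance \<Rightarrow> (nat \<Rightarrow> recommendation) \<Rightarrow> nat \<Rightarrow> nat set \<times> nat set" where
  "state I Rs 0 = ({1..nU I}, {1..nC I})"
| "state I Rs (Suc t) =
     (let (Us, Cs) = state I Rs t
      in (next_users I Us (Rs t), next_creators I Us Cs (Rs t)))"

definition users_at :: "rinstance \<Rightarrow> (nat \<Rightarrow> recommendation) \<Rightarrow> nat \<Rightarrow> nat set" where
  "users_at I Rs t = fst (state I Rs t)"

definition creators_at :: "rinstance \<Rightarrow> (nat \<Rightarrow> recommendation) \<Rightarrow> nat \<Rightarrow> nat set" where
  "creators_at I Rs t = snd (state I Rs t)"

definition feasible :: "rinstance \<Rightarrow> (nat \<Rightarrow> recommendation) \<Rightarrow> bool" where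
  "feasible I Rs \<longleftrightarrow> (\<forall>t. valid_rec I (users_at I Rs t) (creators_at I Rs t) (Rs t))"

definition avg_eng :: "rinstance \<Rightarrow> (nat \<Rightarrow> recommendation) \<Rightarrow> nat \<Rightarrow> real" where
  "avg_eng I Rs T = (\<Sum>t<T. engagement I (users_at I Rs t) (Rs t)) / real T"

definition has_LTE :: "rinstance \<Rightarrow> (nat \<Rightarrow> recommendation) \<Rightarrow> bool" where
  "has_LTE I Rs \<longleftrightarrow> convergent (avg_eng I Rs)"

definition LTE :: "rinstance \<Rightarrow> (nat \<Rightarrow> recommendation) \<Rightarrow> real" where
  "LTE I Rs = lim (avg_eng I Rs)"

definition is_FL :: "rinstance \<Rightarrow> (nat \<Rightarrow> recommendation) \<Rightarrow> bool" where
  "is_FL I Rs \<longleftrightarrow> feasible I Rs \<and> has_LTE I Rs \<and>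
     (\<forall>Rs'. feasible I Rs' \<and> has_LTE I Rs' \<longrightarrow> LTE I Rs' \<le> LTE I Rs)"

definition is_UC :: "rinstance \<Rightarrow> (nat \<Rightarrow> recommendation) \<Rightarrow> bool" where
  "is_UC I Rs \<longleftrightarrow> feasible I Rs \<and>
     (\<forall>t. \<forall>i\<in>users_at I Rs t.
        \<forall>S. S \<subseteq> creators_at I Rs t \<and> card S \<le> kK I \<longrightarrow>
          (\<Sum>j\<in>S. eng I i j) \<le> (\<Sum>j\<in>Rs t i. eng I i j))"

end

theory Submission
  imports Defs
begin

lemma state_Suc':
  "state I Rs (Suc t) = (next_users I (users_at I Rs t) (Rs t),
      next_creators I (users_at I Rs t) (creators_at I Rs t) (Rs t))"
  by (simp add: users_at_def creators_at_def case_prod_beta Let_def)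

lemma users_Suc: "users_at I Rs (Suc t) = next_users I (users_at I Rs t) (Rs t)"
  by (simp add: users_at_def state_Suc' del: state.simps)

lemma creators_Suc: "creators_at I Rs (Suc t) = next_creators I (users_at I Rs t) (creators_at I Rs t) (Rs t)"
  by (simp add: creators_at_def state_Suc' del: state.simps)

lemma users_0: "users_at I Rs 0 = {1..nU I}" by (simp add: users_at_def)
lemma creators_0: "creators_at I Rs 0 = {1..nC I}" by (simp add: creators_at_def)

lemma users_sub: "users_at I Rs t \<subseteq> {1..nU I}"
  by (induction t) (auto simp: users_0 users_Suc next_users_def)

lemma creators_sub: "creators_at I Rs t \<subseteq> {1..nC I}"
  by (induction t) (auto simp: creators_0 creators_Suc next_creators_def)

lemma creators_mono: "creators_at I Rs (Suc t) \<subseteq> creators_at I Rs t"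
  by (auto simp: creators_Suc next_creators_def)

definition inst :: "nat \<Rightarrow> nat \<Rightarrow> rinstance" where
  "inst n m = (| dim = 2, nU = 2*n, nC = m+1,
      utype = (\<lambda>i k. if (k=0) = (i \<le> n) then 1 else 0),
      ctype = (\<lambda>j k. if (k=0) = (j \<noteq> 1) then 1 else 0),
      kK = 1, abar = 2*n, ebar = 0 |)"

lemma inst_simps[simp]: "dim (inst n m) = 2" "nU (inst n m) = 2*n" "nC (inst n m) = m+1"
  "kK (inst n m) = 1" "abar (inst n m) = 2*n" "ebar (inst n m) = 0"
  by (simp_all add: inst_def)

lemma eng_eq: "eng (inst n m) i j = (if (i \<le> n) = (j \<noteq> 1) then 1 else 0)"
  by (simp add: eng_def inst_def numeral_2_eq_2 lessThan_Suc)

lemma wf: "wf_instance (inst n m)"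
  by (simp add: wf_instance_def unit_nonneg_def inst_def numeral_2_eq_2 lessThan_Suc)

lemma sum_eng: "(\<Sum>i\<in>{1..2*n}. eng (inst n m) i c) = real n"
proof -
  have split: "{1..2*n} = {1..n} \<union> {n+1..2*n}" by auto
  have "(\<Sum>i\<in>{1..2*n}. eng (inst n m) i c) =
     (\<Sum>i\<in>{1..n}. eng (inst n m) i c) + (\<Sum>i\<in>{n+1..2*n}. eng (inst n m) i c)"
    unfolding split by (rule sum.union_disjoint) auto
  also have "\<dots> = real n"
    by (cases "c = 1") (simp_all add: eng_eq)
  finally show ?thesis .
qed


lemma eng_nonneg: "0 \<le> eng (inst n m) i j" by (simp add: eng_eq)
lemma eng_le1: "eng (inst n m) i j \<le> 1" by (simp add: eng_eq)

lemma valid_card_le1: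
  assumes "valid_rec (inst n m) Us Cs R" "i \<in> Us"
  shows "R i \<subseteq> Cs" "card (R i) \<le> 1"
  using assms by (auto simp: valid_rec_def)

lemma creators_Suc_single:
  assumes n: "n \<ge> 1" and feas: "feasible (inst n m) Rs"
    and j: "j \<in> creators_at (inst n m) Rs (Suc t)" and j': "j' \<in> creators_at (inst n m) Rs (Suc t)"
  shows "j = j'"
proof -
  let ?I = "inst n m"
  let ?U = "users_at ?I Rs t"
  have U: "?U \<subseteq> {1..2*n}" using users_sub[of ?I Rs t] by simp
  have all: "\<forall>i\<in>{1..2*n}. i \<in> ?U \<and> c \<in> Rs t i"
    if c: "c \<in> creators_at ?I Rs (Suc t)" for c
  proof -
    have card: "card {i\<in>?U. c \<in> Rs t i} \<ge> 2*n"
      using c by (simp add: creators_Suc next_creators_def)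
    have sub: "{i\<in>?U. c \<in> Rs t i} \<subseteq> {1..2*n}" using U by auto
    have "{i\<in>?U. c \<in> Rs t i} = {1..2*n}"
      using card sub by (metis card_atLeastAtMost card_seteq diff_Suc_1 finite_atLeastAtMost)
    thus ?thesis by auto
  qed
  have one: "(1::nat) \<in> {1..2*n}" using n by simp
  have U1: "1 \<in> ?U" and jR: "j \<in> Rs t 1" using all[OF j] one by auto
  have j'R: "j' \<in> Rs t 1" using all[OF j'] one by auto
  have v: "valid_rec ?I ?U (creators_at ?I Rs t) (Rs t)" using feas by (simp add: feasible_def)
  have sub: "Rs t 1 \<subseteq> creators_at ?I Rs t" and c1: "card (Rs t 1) \<le> 1"
    using valid_card_le1[OF v U1] by auto
  have fin: "finite (Rs t 1)"
    using sub creators_sub[of ?I Rs t] finite_subset by (metis finite_atLeastAtMost)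
  show ?thesis using fin c1 jR j'R
    by (metis One_nat_def card_le_Suc0_iff_eq)
qed

lemma eng_Suc_bound:
  assumes n: "n \<ge> 1" and feas: "feasible (inst n m) Rs"
  shows "engagement (inst n m) (users_at (inst n m) Rs (Suc t)) (Rs (Suc t)) \<le> real n"
proof -
  let ?I = "inst n m"
  let ?U = "users_at ?I Rs (Suc t)"
  let ?C = "creators_at ?I Rs (Suc t)"
  have U: "?U \<subseteq> {1..2*n}" using users_sub[of ?I Rs "Suc t"] by simp
  have v: "valid_rec ?I ?U ?C (Rs (Suc t))" using feas by (simp add: feasible_def)
  show ?thesis
  proof (cases "?C = {}")
    case True
    then have "\<forall>i\<in>?U. Rs (Suc t) i = {}" using v by (auto simp: valid_rec_def)
    then show ?thesis by (simp add: engagement_def)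
  next
    case False
    then obtain c where c: "c \<in> ?C" by auto
    have Csub: "?C \<subseteq> {c}" using creators_Suc_single[OF n feas c] by auto
    have each: "(\<Sum>j\<in>Rs (Suc t) i. eng ?I i j) \<le> eng ?I i c" if i: "i \<in> ?U" for i
    proof -
      have "Rs (Suc t) i \<subseteq> {c}" using v i Csub by (auto simp: valid_rec_def)
      then have "Rs (Suc t) i = {} \<or> Rs (Suc t) i = {c}" by auto
      then show ?thesis using eng_nonneg[of n m i c] by auto
    qed
    have "engagement ?I ?U (Rs (Suc t)) \<le> (\<Sum>i\<in>?U. eng ?I i c)"
      unfolding engagement_def by (rule sum_mono) (rule each)
    also have "\<dots> \<le> (\<Sum>i\<in>{1..2*n}. eng ?I i c)"
      by (rule sum_mono2) (use U eng_nonneg in auto)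
    also have "\<dots> = real n" by (rule sum_eng)
    finally show ?thesis .
  qed
qed


lemma LTE_bound:
  assumes n: "n \<ge> 1" and feas: "feasible (inst n m) Rs" and h: "has_LTE (inst n m) Rs"
  shows "LTE (inst n m) Rs \<le> real n"
proof -
  let ?I = "inst n m"
  define E where "E t = engagement ?I (users_at ?I Rs t) (Rs t)" for t
  have le: "avg_eng ?I Rs T \<le> E 0 / real T + real n" for T
  proof (cases T)
    case 0 then show ?thesis by (simp add: avg_eng_def)
  next
    case (Suc T')
    have "(\<Sum>t<T. E t) = E 0 + (\<Sum>t<T'. E (Suc t))"
      unfolding Suc by (rule sum.lessThan_Suc_shift)
    also have "\<dots> \<le> E 0 + (\<Sum>t<T'. real n)"
    proof -
      have "(\<Sum>t<T'. E (Suc t)) \<le> (\<Sum>t<T'. real n)"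
        by (rule sum_mono) (simp add: E_def eng_Suc_bound[OF n feas])
      then show ?thesis by simp
    qed
    also have "\<dots> \<le> E 0 + real n * real T" using Suc by (simp add: algebra_simps)
    finally have "(\<Sum>t<T. E t) \<le> E 0 + real n * real T" .
    then have "(\<Sum>t<T. E t) / real T \<le> (E 0 + real n * real T) / real T"
      by (rule divide_right_mono) simp
    also have "\<dots> = E 0 / real T + real n" using Suc by (simp add: field_simps)
    finally show ?thesis by (simp add: avg_eng_def E_def)
  qed
  have t1: "avg_eng ?I Rs \<longlonglongrightarrow> LTE ?I Rs"
    using h by (simp add: has_LTE_def LTE_def convergent_LIMSEQ_iff)
  have t2: "(\<lambda>T. E 0 / real T + real n) \<longlonglongrightarrow> 0 + real n"
    by (intro tendsto_add lim_const_over_n tendsto_const)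
  show ?thesis using LIMSEQ_le[OF t1 t2] le by simp
qed

definition myFL :: "nat \<Rightarrow> recommendation" where "myFL t i = {2}"

lemma myFL_state:
  assumes n: "n \<ge> 1" and m: "m \<ge> 1"
  shows "users_at (inst n m) myFL t = {1..2*n} \<and>
         creators_at (inst n m) myFL t = (if t = 0 then {1..m+1} else {2})"
proof (induction t)
  case 0 then show ?case by (simp add: users_0 creators_0)
next
  case (Suc t)
  have u: "next_users (inst n m) {1..2*n} (myFL t) = {1..2*n}"
    by (auto simp: next_users_def myFL_def eng_eq)
  have c: "{j \<in> C. 2 * n \<le> card {i \<in> {1..2*n}. j \<in> myFL t i}} = {2}" if "2 \<in> C" for C
  proof -
    have "2 * n \<le> card {i \<in> {1..2*n}. j \<in> myFL t i} \<longleftrightarrow> j = 2" for j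
    proof (cases "j = 2")
      case True
      then have "{i \<in> {1..2*n}. j \<in> myFL t i} = {1..2*n}" by (auto simp: myFL_def)
      then show ?thesis using True by simp
    next
      case False
      then have "{i \<in> {1..2*n}. j \<in> myFL t i} = {}" by (auto simp: myFL_def)
      then have z: "card {i \<in> {1..2*n}. j \<in> myFL t i} = 0" by (simp only: card.empty)
      show ?thesis using False n by (simp only: z) simp
    qed
    then show ?thesis using that by auto
  qed
  have U: "users_at (inst n m) myFL t = {1..2*n}" using Suc by simp
  have two: "2 \<in> creators_at (inst n m) myFL t" using Suc m by (auto split: if_splits)
  have "creators_at (inst n m) myFL (Suc t) = {2}"
    unfolding creators_Suc U next_creators_def inst_simps by (rule c[OF two])
  then show ?case using U u by (simp add: users_Suc)
qed


lemma myFL_feasible: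
  assumes n: "n \<ge> 1" and m: "m \<ge> 1"
  shows "feasible (inst n m) myFL"
  unfolding feasible_def valid_rec_def
proof (intro allI ballI conjI)
  fix t i
  have C: "creators_at (inst n m) myFL t = (if t = 0 then {1..m+1} else {2})"
    using myFL_state[OF n m] by blast
  show "myFL t i \<subseteq> creators_at (inst n m) myFL t" using C m by (auto simp: myFL_def)
  have "card (creators_at (inst n m) myFL t) \<ge> 1" using C m by auto
  then show "card (myFL t i) = min (kK (inst n m)) (card (creators_at (inst n m) myFL t))"
    by (simp add: myFL_def)
qed

lemma myFL_avg:
  assumes n: "n \<ge> 1" and m: "m \<ge> 1"
  shows "avg_eng (inst n m) myFL \<longlonglongrightarrow> real n"
proof -
  have E: "engagement (inst n m) (users_at (inst n m) myFL t) (myFL t) = real n" for t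
    using myFL_state[OF n m, of t] sum_eng[of n m 2] by (simp add: engagement_def myFL_def)
  have "eventually (\<lambda>T. avg_eng (inst n m) myFL T = real n) sequentially"
    using eventually_ge_at_top[of 1] by eventually_elim (simp add: avg_eng_def E)
  then show ?thesis by (rule tendsto_eventually)
qed

lemma myFL_LTE:
  assumes n: "n \<ge> 1" and m: "m \<ge> 1"
  shows "has_LTE (inst n m) myFL" "LTE (inst n m) myFL = real n"
  using myFL_avg[OF n m] by (auto simp: has_LTE_def LTE_def convergentI limI)

lemma myFL_is_FL:
  assumes n: "n \<ge> 1" and m: "m \<ge> 1"
  shows "is_FL (inst n m) myFL"
  using myFL_feasible[OF n m] myFL_LTE[OF n m] LTE_bound[OF n] by (auto simp: is_FL_def)


lemma UC_kill:
  assumes n: "n \<ge> 1" and m: "m \<ge> 1"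
    and v: "valid_rec (inst n m) {1..2*n} {1..m+1} R"
    and opt: "\<forall>i\<in>{1..2*n}. \<forall>S. S \<subseteq> {1..m+1} \<and> card S \<le> 1 \<longrightarrow>
          (\<Sum>j\<in>S. eng (inst n m) i j) \<le> (\<Sum>j\<in>R i. eng (inst n m) i j)"
  shows "next_creators (inst n m) {1..2*n} {1..m+1} R = {}"
proof -
  let ?I = "inst n m"
  have Ri: "\<exists>x. R i = {x} \<and> (i \<le> n \<longrightarrow> x \<noteq> 1) \<and> (\<not> i \<le> n \<longrightarrow> x = 1)"
    if i: "i \<in> {1..2*n}" for i
  proof -
    have "card (R i) = 1" using v i by (simp add: valid_rec_def)
    then obtain x where x: "R i = {x}" by (auto simp: card_Suc_eq)
    have s2: "{2::nat} \<subseteq> {1..m+1} \<and> card {2::nat} \<le> 1" using m by simp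
    have s1: "{1::nat} \<subseteq> {1..m+1} \<and> card {1::nat} \<le> 1" using m by simp
    have S2: "eng ?I i 2 \<le> eng ?I i x"
      using opt[rule_format, OF i s2] x by simp
    have S1: "eng ?I i 1 \<le> eng ?I i x"
      using opt[rule_format, OF i s1] x by simp
    show ?thesis
    proof (intro exI conjI impI)
      show "R i = {x}" by fact
      show "x \<noteq> 1" if "i \<le> n" using S2 that by (auto simp: eng_eq split: if_splits)
      show "x = 1" if "\<not> i \<le> n" using S1 that by (auto simp: eng_eq split: if_splits)
    qed
  qed
  have small: "card {i\<in>{1..2*n}. j \<in> R i} < 2*n" for j
  proof (cases "j = 1")
    case True
    have "{i\<in>{1..2*n}. j \<in> R i} \<subseteq> {n+1..2*n}"
    proof
      fix i assume "i \<in> {i\<in>{1..2*n}. j \<in> R i}"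
      then have i: "i \<in> {1..2*n}" and ji: "j \<in> R i" by auto
      obtain x where x: "R i = {x}" "i \<le> n \<longrightarrow> x \<noteq> 1" using Ri[OF i] by blast
      have "\<not> i \<le> n" using x ji True by auto
      then show "i \<in> {n+1..2*n}" using i by simp
    qed
    then have "card {i\<in>{1..2*n}. j \<in> R i} \<le> card {n+1..2*n}" by (rule card_mono[rotated]) simp
    then show ?thesis using n by simp
  next
    case False
    have "{i\<in>{1..2*n}. j \<in> R i} \<subseteq> {1..n}"
    proof
      fix i assume "i \<in> {i\<in>{1..2*n}. j \<in> R i}"
      then have i: "i \<in> {1..2*n}" and ji: "j \<in> R i" by auto
      obtain x where x: "R i = {x}" "\<not> i \<le> n \<longrightarrow> x = 1" using Ri[OF i] by blast
      have "i \<le> n" using x ji False by auto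
      then show "i \<in> {1..n}" using i by simp
    qed
    then have "card {i\<in>{1..2*n}. j \<in> R i} \<le> card {1..n}" by (rule card_mono[rotated]) simp
    then show ?thesis using n by simp
  qed
  show ?thesis unfolding next_creators_def inst_simps using small by (simp add: not_le)
qed


lemma kill_all:
  assumes n: "n \<ge> 1" and m: "m \<ge> 1"
    and v: "valid_rec (inst n m) {1..2*n} {1..m+1} (Rs 0)"
    and opt: "\<forall>i\<in>{1..2*n}. \<forall>S. S \<subseteq> {1..m+1} \<and> card S \<le> 1 \<longrightarrow>
          (\<Sum>j\<in>S. eng (inst n m) i j) \<le> (\<Sum>j\<in>Rs 0 i. eng (inst n m) i j)"
  shows "creators_at (inst n m) Rs (Suc t) = {}"
proof (induction t)
  case 0
  show ?case using UC_kill[OF n m v opt]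
    by (simp add: creators_Suc users_0 creators_0)
next
  case (Suc t)
  then show ?case using creators_mono[of "inst n m" Rs "Suc t"] by auto
qed

lemma UC_facts:
  assumes n: "n \<ge> 1" and m: "m \<ge> 1" and uc: "is_UC (inst n m) Rs"
  shows "has_LTE (inst n m) Rs \<and> LTE (inst n m) Rs = 0"
proof -
  let ?I = "inst n m"
  have f: "feasible ?I Rs" using uc by (simp add: is_UC_def)
  have v: "valid_rec ?I {1..2*n} {1..m+1} (Rs 0)"
    using f unfolding feasible_def by (metis users_0 creators_0 inst_simps(2,3))
  have opt: "\<forall>i\<in>{1..2*n}. \<forall>S. S \<subseteq> {1..m+1} \<and> card S \<le> 1 \<longrightarrow>
          (\<Sum>j\<in>S. eng ?I i j) \<le> (\<Sum>j\<in>Rs 0 i. eng ?I i j)"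
    using uc unfolding is_UC_def by (metis users_0 creators_0 inst_simps(2,3,4))
  define E where "E t = engagement ?I (users_at ?I Rs t) (Rs t)" for t
  have E0: "E (Suc t) = 0" for t
  proof -
    have "valid_rec ?I (users_at ?I Rs (Suc t)) {} (Rs (Suc t))"
      using f kill_all[where Rs=Rs, OF n m v opt, of t] by (metis feasible_def)
    then have "\<forall>i\<in>users_at ?I Rs (Suc t). Rs (Suc t) i = {}" by (auto simp: valid_rec_def)
    then show ?thesis by (simp add: E_def engagement_def)
  qed
  have avg: "avg_eng ?I Rs T = E 0 / real T" for T
  proof (cases T)
    case 0 then show ?thesis by (simp add: avg_eng_def)
  next
    case (Suc T')
    have "(\<Sum>t<T. E t) = E 0 + (\<Sum>t<T'. E (Suc t))"
      unfolding Suc by (rule sum.lessThan_Suc_shift)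
    then have "(\<Sum>t<T. E t) = E 0" by (simp add: E0)
    then show ?thesis by (simp add: avg_eng_def E_def[symmetric])
  qed
  have "avg_eng ?I Rs \<longlonglongrightarrow> 0" unfolding avg by (rule lim_const_over_n)
  then show ?thesis by (auto simp: has_LTE_def LTE_def convergentI limI)
qed

definition myUC :: "nat \<Rightarrow> nat \<Rightarrow> recommendation" where
  "myUC n t i = (if t = 0 then (if i \<le> n then {2} else {1}) else {})"

lemma myUC_is_UC:
  assumes n: "n \<ge> 1" and m: "m \<ge> 1"
  shows "is_UC (inst n m) (myUC n)"
proof -
  let ?I = "inst n m"
  have v: "valid_rec ?I {1..2*n} {1..m+1} (myUC n 0)"
    using m by (auto simp: valid_rec_def myUC_def)
  have opt: "\<forall>i\<in>{1..2*n}. \<forall>S. S \<subseteq> {1..m+1} \<and> card S \<le> 1 \<longrightarrow>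
          (\<Sum>j\<in>S. eng ?I i j) \<le> (\<Sum>j\<in>myUC n 0 i. eng ?I i j)"
  proof (intro ballI allI impI)
    fix i S assume i: "i \<in> {1..2*n}" and S: "S \<subseteq> {1..m+1} \<and> card S \<le> 1"
    have fin: "finite S" using S finite_subset by blast
    have "S = {} \<or> (\<exists>x. S = {x})" using S fin
      by (metis One_nat_def card_0_eq card_le_Suc0_iff_eq le_eq_less_or_eq less_one
          card_1_singletonE)
    then have "(\<Sum>j\<in>S. eng ?I i j) \<le> 1" using eng_le1[of n m i] by auto
    also have "1 = (\<Sum>j\<in>myUC n 0 i. eng ?I i j)" by (simp add: myUC_def eng_eq)
    finally show "(\<Sum>j\<in>S. eng ?I i j) \<le> (\<Sum>j\<in>myUC n 0 i. eng ?I i j)" .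
  qed
  have C: "creators_at ?I (myUC n) (Suc t) = {}" for t by (rule kill_all[where Rs="myUC n", OF n m v opt])
  have feas: "feasible ?I (myUC n)"
    unfolding feasible_def
  proof
    fix t show "valid_rec ?I (users_at ?I (myUC n) t) (creators_at ?I (myUC n) t) (myUC n t)"
    proof (cases t)
      case 0 then show ?thesis using v by (simp add: users_0 creators_0)
    next
      case (Suc t') then show ?thesis using C[of t'] by (simp add: valid_rec_def myUC_def)
    qed
  qed
  show ?thesis unfolding is_UC_def
  proof (intro conjI feas allI ballI impI)
    fix t i S
    assume i: "i \<in> users_at ?I (myUC n) t"
      and S: "S \<subseteq> creators_at ?I (myUC n) t \<and> card S \<le> kK ?I"
    show "(\<Sum>j\<in>S. eng ?I i j) \<le> (\<Sum>j\<in>myUC n t i. eng ?I i j)"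
    proof (cases t)
      case 0 then show ?thesis using opt i S by (simp add: users_0 creators_0)
    next
      case (Suc t') then show ?thesis using C[of t'] S by (simp add: myUC_def)
    qed
  qed
qed

theorem theorem3:
  fixes n m :: nat
  assumes "n \<ge> 1" and "m \<ge> 1"
  shows "\<exists>I. wf_instance I \<and> nU I \<ge> n \<and> nC I \<ge> m \<and>
           (\<exists>FL. is_FL I FL) \<and> (\<exists>UC. is_UC I UC) \<and>
           (\<forall>FL. is_FL I FL \<longrightarrow> LTE I FL > 0 \<and>
              (\<forall>UC. is_UC I UC \<longrightarrow> has_LTE I UC \<and> LTE I UC / LTE I FL = 0))"
proof (rule exI[of _ "inst n m"], intro conjI allI impI)
  let ?I = "inst n m"
  show "wf_instance ?I" by (rule wf)
  show "nU ?I \<ge> n" by simp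
  show "nC ?I \<ge> m" by simp
  show "\<exists>FL. is_FL ?I FL" using myFL_is_FL[OF assms] by blast
  show "\<exists>UC. is_UC ?I UC" using myUC_is_UC[OF assms] by blast
  fix FL assume fl: "is_FL ?I FL"
  have all: "\<forall>Rs'. feasible ?I Rs' \<and> has_LTE ?I Rs' \<longrightarrow> LTE ?I Rs' \<le> LTE ?I FL"
    using fl by (simp add: is_FL_def)
  have "LTE ?I myFL \<le> LTE ?I FL"
    using all myFL_feasible[OF assms] myFL_LTE[OF assms] by blast
  then show "LTE ?I FL > 0" using myFL_LTE[OF assms] assms by simp
  fix UC assume uc: "is_UC ?I UC"
  show "has_LTE ?I UC" using UC_facts[OF assms uc] by simp
  show "LTE ?I UC / LTE ?I FL = 0" using UC_facts[OF assms uc] by simp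
qed

end
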